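(* Let $k\ge 0$ be an integer and let $\mathcal{H}$ be a family of $n$ half-circles in the circle $\mathbb{S}^1$ with $n > 3k$. Then $\mathcal{H}$ contains at most $k+1$ different $k$-cliques.
   Context: A half-circle of $\mathbb{S}^1$ is an arc of $\mathbb{S}^1$ consisting of half of the circle (a semicircle). A subset $J$ of $k$ half-circles from $\mathcal{H}$ is a $k$-clique if there is a point $p\in\mathbb{S}^1$ that lies in all half-circles of $J$ but in no half-circle of $\mathcal{H}\setminus J$. *)

theory Defs
  imports "HOL-Analysis.Analysis"
begin

text \<open>The circle S^1 is modelled as the unit circle in the complex plane.
  A half-circle is a closed semicircle: the points of S^1 having non-negative
  inner product with some unit vector u.\<close>

definition half_circle :: "complex set \<Rightarrow> bool" where
  "half_circle S \<longleftrightarrow> (\<exists>u. norm u = 1 \<and> S = {p \<in> sphere 0 1. p \<bullet> u \<ge> 0})"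

definition is_clique :: "nat \<Rightarrow> complex set set \<Rightarrow> complex set set \<Rightarrow> bool" where
  "is_clique k H J \<longleftrightarrow> J \<subseteq> H \<and> card J = k \<and>
     (\<exists>p \<in> sphere 0 1. (\<forall>S\<in>J. p \<in> S) \<and> (\<forall>S\<in>H - J. p \<notin> S))"

end

theory Submission
  imports Defs
begin

lemma halfplane_helly:
  fixes Q :: "complex set"
  assumes fin: "finite Q" and ne: "Q \<noteq> {}"
    and tri: "\<And>a b c. a\<in>Q \<Longrightarrow> b\<in>Q \<Longrightarrow> c\<in>Q \<Longrightarrow> \<exists>w. a \<bullet> w > 0 \<and> b \<bullet> w > 0 \<and> c \<bullet> w > 0"
  shows "\<exists>w. \<forall>p\<in>Q. p \<bullet> w > 0"
proof -
  define f where "f = (\<lambda>p::complex. {w. p \<bullet> w > 0})"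
  define F where "F = f ` Q"
  have finF: "finite F" using fin by (simp add: F_def)
  have "\<Inter>F \<noteq> {}"
  proof (cases "card F \<ge> 3")
    case True
    show ?thesis
    proof (rule Helly)
      show "card F \<ge> DIM(complex) + 1" using True by simp
      show "\<forall>s\<in>F. convex s" by (auto simp: F_def f_def convex_halfspace_gt)
      fix t assume t: "t \<subseteq> F" "card t = DIM(complex) + 1"
      then have "card t = 3" by simp
      then obtain x y z where xyz: "t = {x,y,z}" by (auto simp: card_3_iff)
      with t obtain a b c where abc: "a\<in>Q" "b\<in>Q" "c\<in>Q" "x = f a" "y = f b" "z = f c"
        by (auto simp: F_def)
      from tri[OF abc(1-3)] obtain w where "a \<bullet> w > 0" "b \<bullet> w > 0" "c \<bullet> w > 0" by blast
      then have "w \<in> \<Inter>t" using xyz abc by (auto simp: f_def)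
      then show "\<Inter>t \<noteq> {}" by blast
    qed
  next
    case False
    obtain a where a: "a \<in> Q" using ne by blast
    have "\<exists>b\<in>Q. F \<subseteq> {f a, f b}"
    proof (cases "F \<subseteq> {f a}")
      case True then show ?thesis using a by blast
    next
      case F1: False
      then obtain b where b: "b \<in> Q" "f b \<noteq> f a" by (auto simp: F_def)
      have "F \<subseteq> {f a, f b}"
      proof
        fix x assume x: "x \<in> F"
        show "x \<in> {f a, f b}"
        proof (rule ccontr)
          assume nx: "x \<notin> {f a, f b}"
          have "{f a, f b, x} \<subseteq> F" using a b x by (auto simp: F_def)
          then have "card {f a, f b, x} \<le> card F" using finF by (rule card_mono[rotated])
          moreover have "card {f a, f b, x} = 3" using nx b(2) by (auto simp: card_insert_if)
          ultimately show False using False by simp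
        qed
      qed
      then show ?thesis using b by blast
    qed
    then obtain b where b: "b \<in> Q" "F \<subseteq> {f a, f b}" by blast
    from tri[OF a b(1) b(1)] obtain w where "a \<bullet> w > 0" "b \<bullet> w > 0" by blast
    then have "w \<in> \<Inter>F" using b by (auto simp: f_def)
    then show ?thesis by blast
  qed
  then obtain w where "w \<in> \<Inter>F" by blast
  then show ?thesis by (auto simp: F_def f_def)
qed

lemma comb_count:
  fixes CL :: "'a set set" and r :: "'a set \<Rightarrow> real"
  assumes finCL: "finite CL" and cardJ: "\<forall>J\<in>CL. finite J \<and> card J = k"
    and mono: "\<And>S. (\<forall>J\<in>CL. \<forall>J'\<in>CL. r J \<le> r J' \<longrightarrow> S\<in>J \<longrightarrow> S\<in>J') \<or>
                     (\<forall>J\<in>CL. \<forall>J'\<in>CL. r J \<le> r J' \<longrightarrow> S\<in>J' \<longrightarrow> S\<in>J)"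
  shows "card CL \<le> k + 1"
proof (cases "CL = {}")
  case True then show ?thesis by simp
next
  case False
  define m where "m = Min (r ` CL)"
  have "m \<in> r ` CL" unfolding m_def using False finCL by (intro Min_in) auto
  then obtain J0 where J0: "J0 \<in> CL" "r J0 = m" by auto
  have J0min: "\<And>J. J \<in> CL \<Longrightarrow> r J0 \<le> r J" using J0 finCL by (auto simp: m_def)
  define g where "g J = card (J0 - J)" for J
  have finJ0: "finite J0" and cJ0: "card J0 = k" using cardJ J0 by auto
  have key: "J1 = J2" if J1: "J1 \<in> CL" and J2: "J2 \<in> CL" and le: "r J1 \<le> r J2"
     and eq: "g J1 = g J2" for J1 J2
  proof -
    have r01: "r J0 \<le> r J1" using J0min J1 by blast
    have h1: "J0 - J1 \<subseteq> J0 - J2"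
    proof
      fix S assume S: "S \<in> J0 - J1"
      from mono[of S] show "S \<in> J0 - J2"
      proof
        assume "\<forall>J\<in>CL. \<forall>J'\<in>CL. r J \<le> r J' \<longrightarrow> S\<in>J \<longrightarrow> S\<in>J'"
        then have "S \<in> J1" using J0(1) J1 r01 S by blast
        then show ?thesis using S by blast
      next
        assume "\<forall>J\<in>CL. \<forall>J'\<in>CL. r J \<le> r J' \<longrightarrow> S\<in>J' \<longrightarrow> S\<in>J"
        then show ?thesis using J1 J2 le S by blast
      qed
    qed
    have h1': "J0 - J1 = J0 - J2"
      using h1 eq unfolding g_def by (intro card_subset_eq) (use finJ0 in auto)
    have h2: "J1 - J0 \<subseteq> J2 - J0"
    proof
      fix S assume S: "S \<in> J1 - J0"
      from mono[of S] show "S \<in> J2 - J0"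
      proof
        assume "\<forall>J\<in>CL. \<forall>J'\<in>CL. r J \<le> r J' \<longrightarrow> S\<in>J \<longrightarrow> S\<in>J'"
        then show ?thesis using J1 J2 le S by blast
      next
        assume "\<forall>J\<in>CL. \<forall>J'\<in>CL. r J \<le> r J' \<longrightarrow> S\<in>J' \<longrightarrow> S\<in>J"
        then have "S \<in> J0" using J0(1) J1 r01 S by blast
        then show ?thesis using S by blast
      qed
    qed
    have cd: "card (J - J0) = card (J0 - J)" if "J \<in> CL" for J
    proof -
      have fJ: "finite J" "card J = k" using cardJ that by auto
      have "card (J - J0) = card J - card (J \<inter> J0)"
        using fJ by (intro card_Diff_subset_Int) auto
      moreover have "card (J0 - J) = card J0 - card (J0 \<inter> J)"
        using finJ0 by (intro card_Diff_subset_Int) auto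
      ultimately show ?thesis using fJ cJ0 by (simp add: Int_commute)
    qed
    have h2': "J1 - J0 = J2 - J0"
      using h2 cd[OF J1] cd[OF J2] h1' cardJ J2
      by (intro card_subset_eq) auto
    have "J1 = (J0 - (J0 - J1)) \<union> (J1 - J0)" by blast
    also have "\<dots> = (J0 - (J0 - J2)) \<union> (J2 - J0)" using h1' h2' by simp
    also have "\<dots> = J2" by blast
    finally show ?thesis .
  qed
  have "inj_on g CL"
  proof (rule inj_onI)
    fix J1 J2 assume "J1 \<in> CL" "J2 \<in> CL" "g J1 = g J2"
    then show "J1 = J2" using key[of J1 J2] key[of J2 J1] by (metis linear)
  qed
  moreover have "g ` CL \<subseteq> {0..k}"
  proof
    fix x assume "x \<in> g ` CL"
    then obtain J where "J \<in> CL" "x = g J" by auto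
    then have "x \<le> card J0" unfolding g_def using finJ0 by (metis Diff_subset card_mono)
    then show "x \<in> {0..k}" using cJ0 by simp
  qed
  ultimately have "card CL \<le> card {0..k}"
    by (metis card_image card_mono finite_atLeastAtMost)
  then show ?thesis by simp
qed

theorem lemma3:
  fixes k n :: nat and H :: "complex set set"
  assumes "finite H" and "card H = n" and "\<forall>S\<in>H. half_circle S" and "n > 3 * k"
  shows "card {J. is_clique k H J} \<le> k + 1"
proof -
  define CL where "CL = {J. is_clique k H J}"
  have CLsub: "CL \<subseteq> Pow H" by (auto simp: CL_def is_clique_def)
  have finCL: "finite CL" using CLsub assms(1) finite_subset by blast
  show ?thesis
  proof (cases "CL = {}")
    case True then show ?thesis by (simp add: CL_def)
  next
    case CLne: False
    define p where "p J = (SOME p. p \<in> sphere (0::complex) 1 \<and> (\<forall>S\<in>J. p \<in> S) \<and> (\<forall>S\<in>H - J. p \<notin> S))" for J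
    have pJ: "p J \<in> sphere 0 1 \<and> (\<forall>S\<in>J. p J \<in> S) \<and> (\<forall>S\<in>H - J. p J \<notin> S)" if "J \<in> CL" for J
    proof -
      have "\<exists>q. q \<in> sphere (0::complex) 1 \<and> (\<forall>S\<in>J. q \<in> S) \<and> (\<forall>S\<in>H - J. q \<notin> S)"
        using that unfolding CL_def is_clique_def mem_Collect_eq by blast
      then show ?thesis unfolding p_def by (rule someI_ex)
    qed
    define u where "u S = (SOME u. norm u = 1 \<and> S = {p \<in> sphere (0::complex) 1. p \<bullet> u \<ge> 0})" for S
    have uS: "norm (u S) = 1 \<and> S = {p \<in> sphere 0 1. p \<bullet> u S \<ge> 0}" if "S \<in> H" for S
    proof -
      have "\<exists>v. norm v = 1 \<and> S = {p \<in> sphere (0::complex) 1. p \<bullet> v \<ge> 0}"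
        using that assms(3) unfolding half_circle_def by blast
      then show ?thesis unfolding u_def by (rule someI_ex)
    qed
    have JH: "J \<subseteq> H" "card J = k" if "J \<in> CL" for J using that by (auto simp: CL_def is_clique_def)
    have memb: "S \<in> J \<longleftrightarrow> p J \<bullet> u S \<ge> 0" if "J \<in> CL" "S \<in> H" for J S
    proof
      assume "S \<in> J"
      then have "p J \<in> S" using pJ[OF that(1)] by blast
      then show "p J \<bullet> u S \<ge> 0" using uS[OF that(2)] by blast
    next
      assume "p J \<bullet> u S \<ge> 0"
      then have "p J \<in> S" using uS[OF that(2)] pJ[OF that(1)] by blast
      then show "S \<in> J" using pJ[OF that(1)] that(2) by blast
    qed
    have tri: "\<exists>w. a \<bullet> w > 0 \<and> b \<bullet> w > 0 \<and> c \<bullet> w > 0"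
      if abc: "a \<in> p ` CL" "b \<in> p ` CL" "c \<in> p ` CL" for a b c
    proof -
      obtain J1 J2 J3 where J: "J1 \<in> CL" "J2 \<in> CL" "J3 \<in> CL" "a = p J1" "b = p J2" "c = p J3"
        using abc by blast
      have c1: "card (J1 \<union> J2 \<union> J3) \<le> card (J1 \<union> J2) + card J3" by (rule card_Un_le)
      have c2: "card (J1 \<union> J2) \<le> card J1 + card J2" by (rule card_Un_le)
      have c3: "card J1 = k" "card J2 = k" "card J3 = k" using JH J(1-3) by auto
      have lt: "card (J1 \<union> J2 \<union> J3) < card H" using c1 c2 c3 assms(2,4) by linarith
      have "\<not> H \<subseteq> J1 \<union> J2 \<union> J3"
      proof
        assume sub: "H \<subseteq> J1 \<union> J2 \<union> J3"
        have "finite (J1 \<union> J2 \<union> J3)" using JH(1)[OF J(1)] JH(1)[OF J(2)] JH(1)[OF J(3)] assms(1)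
          by (meson finite_UnI finite_subset)
        then have "card H \<le> card (J1 \<union> J2 \<union> J3)" using sub by (rule card_mono)
        then show False using lt by linarith
      qed
      then obtain S where S: "S \<in> H" "S \<notin> J1" "S \<notin> J2" "S \<notin> J3" by blast
      have "a \<bullet> (- u S) > 0" "b \<bullet> (- u S) > 0" "c \<bullet> (- u S) > 0"
        using memb[OF J(1) S(1)] memb[OF J(2) S(1)] memb[OF J(3) S(1)] S J by auto
      then show ?thesis by blast
    qed
    obtain w where w: "\<forall>q\<in>p ` CL. q \<bullet> w > 0"
      using halfplane_helly[of "p ` CL"] finCL CLne tri by blast
    define r where "r J = (p J \<bullet> (\<i> * w)) / (p J \<bullet> w)" for J
    have mono: "(\<forall>J\<in>CL. \<forall>J'\<in>CL. r J \<le> r J' \<longrightarrow> S\<in>J \<longrightarrow> S\<in>J') \<or>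
                (\<forall>J\<in>CL. \<forall>J'\<in>CL. r J \<le> r J' \<longrightarrow> S\<in>J' \<longrightarrow> S\<in>J)" for S
    proof (cases "S \<in> H")
      case False
      then show ?thesis using JH by blast
    next
      case True
      define A where "A = u S \<bullet> w"
      define B where "B = u S \<bullet> (\<i> * w)"
      have eqv: "S \<in> J \<longleftrightarrow> A + B * r J \<ge> 0" if "J \<in> CL" for J
      proof -
        define q where "q = p J"
        have s: "q \<bullet> w > 0" using w that by (auto simp: q_def)
        then have "w \<noteq> 0" by auto
        then have nw: "(cmod w)^2 > 0" by simp
        have id: "(q \<bullet> u S) * (cmod w)^2 = A * (q \<bullet> w) + B * (q \<bullet> (\<i> * w))"
          unfolding A_def B_def inner_complex_def cmod_power2 by (simp add: algebra_simps power2_eq_square)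
        have "A + B * r J = (A * (q \<bullet> w) + B * (q \<bullet> (\<i> * w))) / (q \<bullet> w)"
          using s by (simp add: r_def q_def field_simps)
        then have "A + B * r J \<ge> 0 \<longleftrightarrow> A * (q \<bullet> w) + B * (q \<bullet> (\<i> * w)) \<ge> 0"
          using s by (simp add: zero_le_divide_iff)
        also have "\<dots> \<longleftrightarrow> (q \<bullet> u S) * (cmod w)^2 \<ge> 0" using id by simp
        also have "\<dots> \<longleftrightarrow> q \<bullet> u S \<ge> 0" using nw by (simp add: zero_le_mult_iff)
        finally show ?thesis using memb[OF that True] by (simp add: q_def)
      qed
      show ?thesis
      proof (cases "B \<ge> 0")
        case True
        have "A + B * r J \<le> A + B * r J'" if "r J \<le> r J'" for J J'
          using True that by (simp add: mult_left_mono)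
        then have "\<forall>J\<in>CL. \<forall>J'\<in>CL. r J \<le> r J' \<longrightarrow> S\<in>J \<longrightarrow> S\<in>J'"
          using eqv by (metis order_trans)
        then show ?thesis by blast
      next
        case False
        have "A + B * r J' \<le> A + B * r J" if "r J \<le> r J'" for J J'
          using False that by (simp add: mult_left_mono_neg)
        then have "\<forall>J\<in>CL. \<forall>J'\<in>CL. r J \<le> r J' \<longrightarrow> S\<in>J' \<longrightarrow> S\<in>J"
          using eqv by (metis order_trans)
        then show ?thesis by blast
      qed
    qed
    have "card CL \<le> k + 1"
    proof (rule comb_count[OF finCL _ mono])
      show "\<forall>J\<in>CL. finite J \<and> card J = k" using JH assms(1) by (meson finite_subset)
    qed
    then show ?thesis by (simp add: CL_def)
  qed
qed

end
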